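(* Let $R$ be a commutative Noetherian ring and let $a_{ij},\ell_{ij}$ ($1\le i\le 2$, $1\le j\le 3$), $\psi_{12},\psi_{13},\psi_{23},z_1,z_2$ be elements of $R$. Let $\mathbb Q$ be the sequence of $R$-module homomorphisms $$0\to R^2\xrightarrow{q_3}R^6\xrightarrow{q_2}R^5\xrightarrow{q_1}R$$ given by the matrices described below. Then $\mathbb Q$ is a complex (i.e. $q_1q_2=0$ and $q_2q_3=0$). Furthermore, if the ideal of $R$ generated by the five entries of $q_1$ has grade at least three, then $\mathbb Q$ is acyclic (i.e. $\operatorname{H}_j(\mathbb Q)=0$ for $j\ge 1$).
   Context: Write $A=(a_{ij})$ and $L=(\ell_{ij})$ for the $2\times 3$ matrices, $P=(\psi_{23},-\psi_{13},\psi_{12})^{\rm T}$, $[ij|kl]_{a\ell}$ notation is avoided; instead write $N=\sum_{i=1}^3(a_{1i}\ell_{2i}-a_{2i}\ell_{1i})$. The $1\times 5$ matrix is $q_1=[\,g_1\ g_2\ g_3\ g_4\ g_5\,]$ with $g_1=-\det\begin{bmatrix}\psi_{23}&-\psi_{13}&\psi_{12}\\ \ell_{11}&\ell_{12}&\ell_{13}\\ \ell_{21}&\ell_{22}&\ell_{23}\end{bmatrix}-z_2N-z_2z_1$, $g_2=P^{\rm T}A^{\rm T}\begin{bmatrix}\ell_{21}\\-\ell_{11}\end{bmatrix}-z_2(a_{12}a_{23}-a_{13}a_{22})+z_1\psi_{23}$, $g_3=P^{\rm T}A^{\rm T}\begin{bmatrix}\ell_{22}\\-\ell_{12}\end{bmatrix}+z_2(a_{11}a_{23}-a_{13}a_{21})-z_1\psi_{13}$,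 $g_4=P^{\rm T}A^{\rm T}\begin{bmatrix}\ell_{23}\\-\ell_{13}\end{bmatrix}-z_2(a_{11}a_{22}-a_{12}a_{21})+z_1\psi_{12}$, $g_5=-\det(AL^{\rm T})-z_1N-z_1^2$. The $5\times 6$ matrix $q_2$ has columns $C_1,\dots,C_6$ (entries listed from row 1 to row 5): $C_1=(\psi_{12}a_{23}-\psi_{13}a_{22}+\psi_{23}a_{21},\ -\ell_{22}\psi_{12}-\ell_{23}\psi_{13}+z_2a_{21},\ \ell_{21}\psi_{12}-\ell_{23}\psi_{23}+z_2a_{22},\ \ell_{21}\psi_{13}+\ell_{22}\psi_{23}+z_2a_{23},\ 0)$; $C_2=(-\psi_{12}a_{13}+\psi_{13}a_{12}-\psi_{23}a_{11},\ \psi_{12}\ell_{12}+\psi_{13}\ell_{13}-z_2a_{11},\ -\psi_{12}\ell_{11}+\psi_{23}\ell_{13}-z_2a_{12},\ -\psi_{13}\ell_{11}-\psi_{23}\ell_{12}-z_2a_{13},\ 0)$; $C_3=(z_1,\ \ell_{12}\ell_{23}-\ell_{13}\ell_{22},\ -(\ell_{11}\ell_{23}-\ell_{13}\ell_{21}),\ \ell_{11}\ell_{22}-\ell_{12}\ell_{21},\ -z_2)$; $C_4=(a_{12}a_{23}-a_{13}a_{22},\ -(a_{12}\ell_{22}-a_{22}\ell_{12})-(a_{13}\ell_{23}-a_{23}\ell_{13})-z_1,\ a_{12}\ell_{21}-a_{22}\ell_{11},\ a_{13}\ell_{21}-a_{23}\ell_{11},\ -\psi_{23})$; $C_5=(-(a_{11}a_{23}-a_{13}a_{21}),\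 a_{11}\ell_{22}-a_{21}\ell_{12},\ -(a_{11}\ell_{21}-a_{21}\ell_{11})-(a_{13}\ell_{23}-a_{23}\ell_{13})-z_1,\ a_{13}\ell_{22}-a_{23}\ell_{12},\ \psi_{13})$; $C_6=(a_{11}a_{22}-a_{12}a_{21},\ a_{11}\ell_{23}-a_{21}\ell_{13},\ a_{12}\ell_{23}-a_{22}\ell_{13},\ -(a_{11}\ell_{21}-a_{21}\ell_{11})-(a_{12}\ell_{22}-a_{22}\ell_{12})-z_1,\ -\psi_{12})$. The $6\times 2$ matrix $q_3$ has rows (first column entry; second column entry): row 1: $a_{11}\ell_{11}+a_{12}\ell_{12}+a_{13}\ell_{13}$; $a_{11}\ell_{21}+a_{12}\ell_{22}+a_{13}\ell_{23}+z_1$; row 2: $a_{21}\ell_{11}+a_{22}\ell_{12}+a_{23}\ell_{13}-z_1$; $a_{21}\ell_{21}+a_{22}\ell_{22}+a_{23}\ell_{23}$; row 3: $-a_{11}\psi_{23}+a_{12}\psi_{13}-a_{13}\psi_{12}$; $-a_{21}\psi_{23}+a_{22}\psi_{13}-a_{23}\psi_{12}$; row 4: $-\ell_{12}\psi_{12}-\ell_{13}\psi_{13}+z_2a_{11}$; $-\ell_{22}\psi_{12}-\ell_{23}\psi_{13}+z_2a_{21}$; row 5: $\ell_{11}\psi_{12}-\ell_{13}\psi_{23}+z_2a_{12}$; $\ell_{21}\psi_{12}-\ell_{23}\psi_{23}+z_2a_{22}$; row 6: $\ell_{11}\psi_{13}+\ell_{12}\psi_{23}+z_2a_{13}$; $\ell_{21}\psi_{13}+\ell_{22}\psi_{23}+z_2a_{23}$.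 (This is the matrix form, with respect to fixed bases, of the paper's coordinate-free complex built from maps $\phi:F\to G$, $\ell:F^*\to G$, $\psi\in\bigwedge^2F^*$, $\zeta=z_1\beta_1\wedge\beta_2\in\bigwedge^2G$, $z_2\in R$ with $\operatorname{rank}F=3$, $\operatorname{rank}G=2$.) A complex $\cdots\to C_1\to C_0\to 0$ is acyclic if $\operatorname{H}_j=0$ for all $j\ge1$. *)

theory Defs
  imports "Jordan_Normal_Form.Determinant"
begin

definition ring_ideal :: "'a::comm_ring_1 set \<Rightarrow> bool" where
  "ring_ideal I \<longleftrightarrow> 0 \<in> I \<and> (\<forall>x\<in>I. \<forall>y\<in>I. x + y \<in> I) \<and> (\<forall>r. \<forall>x\<in>I. r * x \<in> I)"

definition ideal_gen :: "'a::comm_ring_1 set \<Rightarrow> 'a set" where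
  "ideal_gen S = {y. \<exists>c. y = (\<Sum>s\<in>S. c s * s)}"

definition noetherian_ring :: "'a::comm_ring_1 itself \<Rightarrow> bool" where
  "noetherian_ring _ \<longleftrightarrow>
     (\<forall>I::'a set. ring_ideal I \<longrightarrow> (\<exists>F. finite F \<and> F \<subseteq> I \<and> I = ideal_gen F))"

definition weak_regular_seq :: "'a::comm_ring_1 list \<Rightarrow> bool" where
  "weak_regular_seq xs \<longleftrightarrow>
     (\<forall>i < length xs. \<forall>r. xs ! i * r \<in> ideal_gen (set (take i xs))
                         \<longrightarrow> r \<in> ideal_gen (set (take i xs)))"

text \<open>grade I >= n: I contains an R-regular sequence of length n (for I = R the grade
  is infinite by convention; weak regular sequences give exactly this, since for a proper
  ideal every weak regular sequence inside I is regular).\<close>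
definition grade_at_least :: "nat \<Rightarrow> 'a::comm_ring_1 set \<Rightarrow> bool" where
  "grade_at_least n I \<longleftrightarrow> (\<exists>xs. length xs = n \<and> set xs \<subseteq> I \<and> weak_regular_seq xs)"

definition matA :: "'a::comm_ring_1 \<Rightarrow> 'a \<Rightarrow> 'a \<Rightarrow> 'a \<Rightarrow> 'a \<Rightarrow> 'a \<Rightarrow> 'a mat" where
  "matA a11 a12 a13 a21 a22 a23 = mat_of_rows_list 3 [[a11,a12,a13],[a21,a22,a23]]"

definition matL :: "'a::comm_ring_1 \<Rightarrow> 'a \<Rightarrow> 'a \<Rightarrow> 'a \<Rightarrow> 'a \<Rightarrow> 'a \<Rightarrow> 'a mat" where
  "matL l11 l12 l13 l21 l22 l23 = mat_of_rows_list 3 [[l11,l12,l13],[l21,l22,l23]]"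

definition q1 :: "'a::comm_ring_1 \<Rightarrow> 'a \<Rightarrow> 'a \<Rightarrow> 'a \<Rightarrow> 'a \<Rightarrow> 'a \<Rightarrow>
    'a \<Rightarrow> 'a \<Rightarrow> 'a \<Rightarrow> 'a \<Rightarrow> 'a \<Rightarrow> 'a \<Rightarrow> 'a \<Rightarrow> 'a \<Rightarrow> 'a \<Rightarrow> 'a \<Rightarrow> 'a \<Rightarrow> 'a mat" where
  "q1 a11 a12 a13 a21 a22 a23 l11 l12 l13 l21 l22 l23 p12 p13 p23 z1 z2 =
   (let A = matA a11 a12 a13 a21 a22 a23;
        L = matL l11 l12 l13 l21 l22 l23;
        P = vec_of_list [p23, -p13, p12];
        N = (a11*l21 - a21*l11) + (a12*l22 - a22*l12) + (a13*l23 - a23*l13);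
        g1 = - det (mat_of_rows_list 3 [[p23, -p13, p12],[l11,l12,l13],[l21,l22,l23]])
             - z2*N - z2*z1;
        g2 = P \<bullet> (transpose_mat A *\<^sub>v vec_of_list [l21, -l11])
             - z2*(a12*a23 - a13*a22) + z1*p23;
        g3 = P \<bullet> (transpose_mat A *\<^sub>v vec_of_list [l22, -l12])
             + z2*(a11*a23 - a13*a21) - z1*p13;
        g4 = P \<bullet> (transpose_mat A *\<^sub>v vec_of_list [l23, -l13])
             - z2*(a11*a22 - a12*a21) + z1*p12;
        g5 = - det (A * transpose_mat L) - z1*N - z1^2
    in mat_of_rows_list 5 [[g1, g2, g3, g4, g5]])"

definition q2 :: "'a::comm_ring_1 \<Rightarrow> 'a \<Rightarrow> 'a \<Rightarrow> 'a \<Rightarrow> 'a \<Rightarrow> 'a \<Rightarrow>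
    'a \<Rightarrow> 'a \<Rightarrow> 'a \<Rightarrow> 'a \<Rightarrow> 'a \<Rightarrow> 'a \<Rightarrow> 'a \<Rightarrow> 'a \<Rightarrow> 'a \<Rightarrow> 'a \<Rightarrow> 'a \<Rightarrow> 'a mat" where
  "q2 a11 a12 a13 a21 a22 a23 l11 l12 l13 l21 l22 l23 p12 p13 p23 z1 z2 =
   mat_of_cols_list 5
    [ [p12*a23 - p13*a22 + p23*a21,
       - l22*p12 - l23*p13 + z2*a21,
       l21*p12 - l23*p23 + z2*a22,
       l21*p13 + l22*p23 + z2*a23,
       0],
      [- p12*a13 + p13*a12 - p23*a11,
       p12*l12 + p13*l13 - z2*a11,
       - p12*l11 + p23*l13 - z2*a12,
       - p13*l11 - p23*l12 - z2*a13,
       0],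
      [z1,
       l12*l23 - l13*l22,
       - (l11*l23 - l13*l21),
       l11*l22 - l12*l21,
       - z2],
      [a12*a23 - a13*a22,
       - (a12*l22 - a22*l12) - (a13*l23 - a23*l13) - z1,
       a12*l21 - a22*l11,
       a13*l21 - a23*l11,
       - p23],
      [- (a11*a23 - a13*a21),
       a11*l22 - a21*l12,
       - (a11*l21 - a21*l11) - (a13*l23 - a23*l13) - z1,
       a13*l22 - a23*l12,
       p13],
      [a11*a22 - a12*a21,
       a11*l23 - a21*l13,
       a12*l23 - a22*l13,
       - (a11*l21 - a21*l11) - (a12*l22 - a22*l12) - z1,
       - p12] ]"

definition q3 :: "'a::comm_ring_1 \<Rightarrow> 'a \<Rightarrow> 'a \<Rightarrow> 'a \<Rightarrow> 'a \<Rightarrow> 'a \<Rightarrow>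
    'a \<Rightarrow> 'a \<Rightarrow> 'a \<Rightarrow> 'a \<Rightarrow> 'a \<Rightarrow> 'a \<Rightarrow> 'a \<Rightarrow> 'a \<Rightarrow> 'a \<Rightarrow> 'a \<Rightarrow> 'a \<Rightarrow> 'a mat" where
  "q3 a11 a12 a13 a21 a22 a23 l11 l12 l13 l21 l22 l23 p12 p13 p23 z1 z2 =
   mat_of_rows_list 2
    [ [a11*l11 + a12*l12 + a13*l13, a11*l21 + a12*l22 + a13*l23 + z1],
      [a21*l11 + a22*l12 + a23*l13 - z1, a21*l21 + a22*l22 + a23*l23],
      [- a11*p23 + a12*p13 - a13*p12, - a21*p23 + a22*p13 - a23*p12],
      [- l12*p12 - l13*p13 + z2*a11, - l22*p12 - l23*p13 + z2*a21],
      [l11*p12 - l13*p23 + z2*a12, l21*p12 - l23*p23 + z2*a22],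
      [l11*p13 + l12*p23 + z2*a13, l21*p13 + l22*p23 + z2*a23] ]"

text \<open>Matrices act on column vectors; f3 : R^n3 -> R^n2 etc.\<close>
definition is_complex3 :: "'a::comm_ring_1 mat \<Rightarrow> 'a mat \<Rightarrow> 'a mat \<Rightarrow> bool" where
  "is_complex3 f1 f2 f3 \<longleftrightarrow>
     f1 * f2 = 0\<^sub>m (dim_row f1) (dim_col f2) \<and> f2 * f3 = 0\<^sub>m (dim_row f2) (dim_col f3)"

definition acyclic3 :: "'a::comm_ring_1 mat \<Rightarrow> 'a mat \<Rightarrow> 'a mat \<Rightarrow> bool" where
  "acyclic3 f1 f2 f3 \<longleftrightarrow>
     (\<forall>v \<in> carrier_vec (dim_col f1). f1 *\<^sub>v v = 0\<^sub>v (dim_row f1) \<longrightarrow>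
         (\<exists>w \<in> carrier_vec (dim_col f2). v = f2 *\<^sub>v w)) \<and>
     (\<forall>v \<in> carrier_vec (dim_col f2). f2 *\<^sub>v v = 0\<^sub>v (dim_row f2) \<longrightarrow>
         (\<exists>w \<in> carrier_vec (dim_col f3). v = f3 *\<^sub>v w)) \<and>
     (\<forall>v \<in> carrier_vec (dim_col f3). f3 *\<^sub>v v = 0\<^sub>v (dim_row f3) \<longrightarrow> v = 0\<^sub>v (dim_col f3))"

end

theory Submission
  imports Defs
begin

lemma det1: assumes "(A::'a::comm_ring_1 mat) \<in> carrier_mat 1 1" shows "det A = A $$ (0,0)"
proof -
  have "det A = (\<Sum>j<1. A $$ (0,j) * cofactor A 0 j)" by (rule laplace_expansion_row[OF assms]) auto
  also have "\<dots> = A $$ (0,0)" using assms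
    by (simp add: cofactor_def det_dim_zero mat_delete_carrier[OF assms, simplified])
  finally show ?thesis .
qed

lemma det2: assumes "(A::'a::comm_ring_1 mat) \<in> carrier_mat 2 2"
  shows "det A = A $$ (0,0) * A $$ (1,1) - A $$ (0,1) * A $$ (1,0)"
proof -
  have c: "\<And>j. mat_delete A 0 j \<in> carrier_mat 1 1" using mat_delete_carrier[OF assms] by simp
  have "det A = (\<Sum>j<2. A $$ (0,j) * cofactor A 0 j)" by (rule laplace_expansion_row[OF assms]) auto
  also have "\<dots> = A $$ (0,0) * det (mat_delete A 0 0) - A $$ (0,1) * det (mat_delete A 0 1)"
    by (simp add: cofactor_def eval_nat_numeral)
  also have "\<dots> = A $$ (0,0) * A $$ (1,1) - A $$ (0,1) * A $$ (1,0)" using assms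
    unfolding det1[OF c] by (simp add: mat_delete_def)
  finally show ?thesis .
qed

lemma det3: assumes "(A::'a::comm_ring_1 mat) \<in> carrier_mat 3 3"
  shows "det A = A $$ (0,0) * (A $$ (1,1) * A $$ (2,2) - A $$ (1,2) * A $$ (2,1))
   - A $$ (0,1) * (A $$ (1,0) * A $$ (2,2) - A $$ (1,2) * A $$ (2,0))
   + A $$ (0,2) * (A $$ (1,0) * A $$ (2,1) - A $$ (1,1) * A $$ (2,0))"
proof -
  have c: "\<And>j. mat_delete A 0 j \<in> carrier_mat 2 2" using mat_delete_carrier[OF assms] by simp
  have "det A = (\<Sum>j<3. A $$ (0,j) * cofactor A 0 j)" by (rule laplace_expansion_row[OF assms]) auto
  also have "\<dots> = A $$ (0,0) * det (mat_delete A 0 0) - A $$ (0,1) * det (mat_delete A 0 1)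
     + A $$ (0,2) * det (mat_delete A 0 2)"
    by (simp add: cofactor_def eval_nat_numeral)
  also have "\<dots> = A $$ (0,0) * (A $$ (1,1) * A $$ (2,2) - A $$ (1,2) * A $$ (2,1))
   - A $$ (0,1) * (A $$ (1,0) * A $$ (2,2) - A $$ (1,2) * A $$ (2,0))
   + A $$ (0,2) * (A $$ (1,0) * A $$ (2,1) - A $$ (1,1) * A $$ (2,0))" using assms
    unfolding det2[OF c] by (simp add: mat_delete_def eval_nat_numeral)
  finally show ?thesis .
qed



lemma sum2: "(\<Sum>i=0..<(2::nat). f i) = f 0 + f 1" by (simp add: eval_nat_numeral)
lemma sum3: "(\<Sum>i=0..<(3::nat). f i) = f 0 + f 1 + f 2" by (simp add: eval_nat_numeral)
lemma sum5: "(\<Sum>i=0..<(5::nat). f i) = f 0 + f 1 + f 2 + f 3 + f 4" by (simp add: eval_nat_numeral)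
lemma sum6: "(\<Sum>i=0..<(6::nat). f i) = f 0 + f 1 + f 2 + f 3 + f 4 + f 5" by (simp add: eval_nat_numeral)
lemma sum1: "(\<Sum>i=0..<(1::nat). f i) = f 0" by (simp add: eval_nat_numeral)

lemma det3_rows: "det (mat_of_rows_list 3 [[a,b,c],[d,e,f],[g,h,i::'a::comm_ring_1]]) =
   a*(e*i - f*h) - b*(d*i-f*g) + c*(d*h-e*g)"
  by (subst det3) (auto simp: mat_of_rows_list_def eval_nat_numeral)

lemma det_prod2: "det (mat_of_rows_list 3 [[a1,a2,a3],[b1,b2,b3]] * transpose_mat (mat_of_rows_list 3 [[c1,c2,c3],[d1,d2,d3::'a::comm_ring_1]]))
   = (a1*c1+a2*c2+a3*c3)*(b1*d1+b2*d2+b3*d3) - (a1*d1+a2*d2+a3*d3)*(b1*c1+b2*c2+b3*c3)"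
  by (subst det2) (auto simp: mat_of_rows_list_def eval_nat_numeral scalar_prod_def sum3 row_def col_def)

lemma dot3: "vec_of_list [x,y,z] \<bullet> (transpose_mat (mat_of_rows_list 3 [[a1,a2,a3],[b1,b2,b3]]) *\<^sub>v vec_of_list [u,w::'a::comm_ring_1])
  = x*(a1*u+b1*w) + y*(a2*u+b2*w) + z*(a3*u+b3*w)"
  by (simp add: mat_of_rows_list_def eval_nat_numeral scalar_prod_def sum3 sum2 row_def mult_mat_vec_def)

definition good :: "'a::comm_ring_1 mat \<Rightarrow> 'a mat \<Rightarrow> 'a mat \<Rightarrow> nat \<Rightarrow> nat \<Rightarrow> nat \<Rightarrow> nat \<Rightarrow> 'a \<Rightarrow> bool" where
 "good F1 F2 F3 n0 n1 n2 n3 x \<longleftrightarrow>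
   (\<forall>v\<in>carrier_vec n1. F1 *\<^sub>v v = 0\<^sub>v n0 \<longrightarrow> (\<exists>w\<in>carrier_vec n2. x \<cdot>\<^sub>v v = F2 *\<^sub>v w)) \<and>
   (\<forall>v\<in>carrier_vec n2. F2 *\<^sub>v v = 0\<^sub>v n1 \<longrightarrow> (\<exists>w\<in>carrier_vec n3. x \<cdot>\<^sub>v v = F3 *\<^sub>v w)) \<and>
   (\<forall>v\<in>carrier_vec n3. F3 *\<^sub>v v = 0\<^sub>v n2 \<longrightarrow> x \<cdot>\<^sub>v v = 0\<^sub>v n3)"

lemma mv_smult: "(A::'a::comm_ring_1 mat) \<in> carrier_mat n m \<Longrightarrow> v \<in> carrier_vec m \<Longrightarrow> A *\<^sub>v (k \<cdot>\<^sub>v v) = k \<cdot>\<^sub>v (A *\<^sub>v v)"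
  by (rule eq_vecI) (auto simp: scalar_prod_def sum_distrib_left mult.left_commute)

lemma mv_zero: "(A::'a::comm_ring_1 mat) \<in> carrier_mat n m \<Longrightarrow> A *\<^sub>v 0\<^sub>v m = 0\<^sub>v n"
  by (rule eq_vecI) (auto simp: scalar_prod_def)

lemma smult_mv: "(A::'a::comm_ring_1 mat) \<in> carrier_mat n m \<Longrightarrow> v \<in> carrier_vec m \<Longrightarrow> (k \<cdot>\<^sub>m A) *\<^sub>v v = k \<cdot>\<^sub>v (A *\<^sub>v v)"
  by (rule eq_vecI) (auto simp: scalar_prod_def sum_distrib_left mult.assoc)

lemma smult_one_mv: "(v::'a::comm_ring_1 vec) \<in> carrier_vec n \<Longrightarrow> (k \<cdot>\<^sub>m 1\<^sub>m n) *\<^sub>v v = k \<cdot>\<^sub>v v"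
  by (subst smult_mv[of _ n n]) auto

lemma zero_smult_v: "(v::'a::comm_ring_1 vec) \<in> carrier_vec n \<Longrightarrow> 0 \<cdot>\<^sub>v v = 0\<^sub>v n"
  by (rule eq_vecI) auto

lemma smult_zero_v: "(r::'a::comm_ring_1) \<cdot>\<^sub>v 0\<^sub>v n = 0\<^sub>v n"
  by (rule eq_vecI) auto

lemma good_zero:
  fixes F1 :: "'a::comm_ring_1 mat"
  assumes "F1 \<in> carrier_mat n0 n1" "F2 \<in> carrier_mat n1 n2" "F3 \<in> carrier_mat n2 n3"
  shows "good F1 F2 F3 n0 n1 n2 n3 0"
  unfolding good_def
proof (intro conjI ballI impI)
  fix v :: "'a vec" assume "v \<in> carrier_vec n1"
  then show "\<exists>w\<in>carrier_vec n2. 0 \<cdot>\<^sub>v v = F2 *\<^sub>v w"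
    using assms by (intro bexI[of _ "0\<^sub>v n2"]) (auto simp: zero_smult_v mv_zero)
next
  fix v :: "'a vec" assume "v \<in> carrier_vec n2"
  then show "\<exists>w\<in>carrier_vec n3. 0 \<cdot>\<^sub>v v = F3 *\<^sub>v w"
    using assms by (intro bexI[of _ "0\<^sub>v n3"]) (auto simp: zero_smult_v mv_zero)
next
  fix v :: "'a vec" assume "v \<in> carrier_vec n3"
  then show "0 \<cdot>\<^sub>v v = 0\<^sub>v n3" by (simp add: zero_smult_v)
qed

lemma good_add:
  assumes c: "F1 \<in> carrier_mat n0 n1" "F2 \<in> carrier_mat n1 n2" "F3 \<in> carrier_mat n2 n3"
    and gx: "good F1 F2 F3 n0 n1 n2 n3 x" and gy: "good F1 F2 F3 n0 n1 n2 n3 y"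
  shows "good F1 F2 F3 n0 n1 n2 n3 (x + y)"
  unfolding good_def
proof (intro conjI ballI impI)
  fix v assume v: "v \<in> carrier_vec n1" "F1 *\<^sub>v v = 0\<^sub>v n0"
  then obtain w1 w2 where w: "w1 \<in> carrier_vec n2" "x \<cdot>\<^sub>v v = F2 *\<^sub>v w1" "w2 \<in> carrier_vec n2" "y \<cdot>\<^sub>v v = F2 *\<^sub>v w2"
    using gx gy unfolding good_def by meson
  show "\<exists>w\<in>carrier_vec n2. (x + y) \<cdot>\<^sub>v v = F2 *\<^sub>v w"
    by (rule bexI[of _ "w1 + w2"]) (use w c in \<open>auto simp: add_smult_distrib_vec mult_add_distrib_mat_vec\<close>)
next
  fix v assume v: "v \<in> carrier_vec n2" "F2 *\<^sub>v v = 0\<^sub>v n1"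
  then obtain w1 w2 where w: "w1 \<in> carrier_vec n3" "x \<cdot>\<^sub>v v = F3 *\<^sub>v w1" "w2 \<in> carrier_vec n3" "y \<cdot>\<^sub>v v = F3 *\<^sub>v w2"
    using gx gy unfolding good_def by meson
  show "\<exists>w\<in>carrier_vec n3. (x + y) \<cdot>\<^sub>v v = F3 *\<^sub>v w"
    by (rule bexI[of _ "w1 + w2"]) (use w c in \<open>auto simp: add_smult_distrib_vec mult_add_distrib_mat_vec\<close>)
next
  fix v assume v: "v \<in> carrier_vec n3" "F3 *\<^sub>v v = 0\<^sub>v n2"
  then have "x \<cdot>\<^sub>v v = 0\<^sub>v n3" "y \<cdot>\<^sub>v v = 0\<^sub>v n3" using gx gy unfolding good_def by auto
  then show "(x + y) \<cdot>\<^sub>v v = 0\<^sub>v n3" by (simp add: add_smult_distrib_vec)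
qed

lemma good_mult:
  assumes c: "F1 \<in> carrier_mat n0 n1" "F2 \<in> carrier_mat n1 n2" "F3 \<in> carrier_mat n2 n3"
    and gx: "good F1 F2 F3 n0 n1 n2 n3 x"
  shows "good F1 F2 F3 n0 n1 n2 n3 (r * x)"
  unfolding good_def
proof (intro conjI ballI impI)
  fix v assume v: "v \<in> carrier_vec n1" "F1 *\<^sub>v v = 0\<^sub>v n0"
  then obtain w1 where w: "w1 \<in> carrier_vec n2" "x \<cdot>\<^sub>v v = F2 *\<^sub>v w1"
    using gx unfolding good_def by meson
  show "\<exists>w\<in>carrier_vec n2. (r * x) \<cdot>\<^sub>v v = F2 *\<^sub>v w"
    by (rule bexI[of _ "r \<cdot>\<^sub>v w1"]) (use w c in \<open>auto simp: smult_smult_assoc[symmetric] mv_smult\<close>)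
next
  fix v assume v: "v \<in> carrier_vec n2" "F2 *\<^sub>v v = 0\<^sub>v n1"
  then obtain w1 where w: "w1 \<in> carrier_vec n3" "x \<cdot>\<^sub>v v = F3 *\<^sub>v w1"
    using gx unfolding good_def by meson
  show "\<exists>w\<in>carrier_vec n3. (r * x) \<cdot>\<^sub>v v = F3 *\<^sub>v w"
    by (rule bexI[of _ "r \<cdot>\<^sub>v w1"]) (use w c in \<open>auto simp: smult_smult_assoc[symmetric] mv_smult\<close>)
next
  fix v assume v: "v \<in> carrier_vec n3" "F3 *\<^sub>v v = 0\<^sub>v n2"
  then have "x \<cdot>\<^sub>v v = 0\<^sub>v n3" using gx unfolding good_def by auto
  then show "(r * x) \<cdot>\<^sub>v v = 0\<^sub>v n3" by (simp add: smult_smult_assoc[symmetric] smult_zero_v)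
qed

lemma good_sum:
  assumes c: "F1 \<in> carrier_mat n0 n1" "F2 \<in> carrier_mat n1 n2" "F3 \<in> carrier_mat n2 n3"
    and "finite S" and "\<forall>s\<in>S. good F1 F2 F3 n0 n1 n2 n3 s"
  shows "good F1 F2 F3 n0 n1 n2 n3 (\<Sum>s\<in>S. f s * s)"
  using assms(4,5)
proof (induction S rule: finite_induct)
  case empty then show ?case using good_zero[OF c] by simp
next
  case (insert s S)
  then show ?case by (simp add: good_add[OF c] good_mult[OF c])
qed

lemma good_homotopy:
  assumes c: "F1 \<in> carrier_mat n0 n1" "F2 \<in> carrier_mat n1 n2" "F3 \<in> carrier_mat n2 n3"
    and h: "hA \<in> carrier_mat n2 n1" "hB \<in> carrier_mat n3 n2" "E \<in> carrier_mat n1 n0"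
    and i1: "F2 * hA + E * F1 = g \<cdot>\<^sub>m 1\<^sub>m n1"
    and i2: "F3 * hB + hA * F2 = g \<cdot>\<^sub>m 1\<^sub>m n2"
    and i3: "hB * F3 = g \<cdot>\<^sub>m 1\<^sub>m n3"
  shows "good F1 F2 F3 n0 n1 n2 n3 g"
  unfolding good_def
proof (intro conjI ballI impI)
  fix v assume v: "v \<in> carrier_vec n1" "F1 *\<^sub>v v = 0\<^sub>v n0"
  have "g \<cdot>\<^sub>v v = (F2 * hA + E * F1) *\<^sub>v v" unfolding i1 using v by (simp add: smult_one_mv)
  also have "\<dots> = F2 *\<^sub>v (hA *\<^sub>v v) + E *\<^sub>v (F1 *\<^sub>v v)"
    using c h v by (subst add_mult_distrib_mat_vec[of _ n1 n1]) auto
  also have "\<dots> = F2 *\<^sub>v (hA *\<^sub>v v)" using c h v by (simp add: mv_zero)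
  finally show "\<exists>w\<in>carrier_vec n2. g \<cdot>\<^sub>v v = F2 *\<^sub>v w" using h v by auto
next
  fix v assume v: "v \<in> carrier_vec n2" "F2 *\<^sub>v v = 0\<^sub>v n1"
  have "g \<cdot>\<^sub>v v = (F3 * hB + hA * F2) *\<^sub>v v" unfolding i2 using v by (simp add: smult_one_mv)
  also have "\<dots> = F3 *\<^sub>v (hB *\<^sub>v v) + hA *\<^sub>v (F2 *\<^sub>v v)"
    using c h v by (subst add_mult_distrib_mat_vec[of _ n2 n2]) auto
  also have "\<dots> = F3 *\<^sub>v (hB *\<^sub>v v)" using c h v by (simp add: mv_zero)
  finally show "\<exists>w\<in>carrier_vec n3. g \<cdot>\<^sub>v v = F3 *\<^sub>v w" using h v by auto
next
  fix v assume v: "v \<in> carrier_vec n3" "F3 *\<^sub>v v = 0\<^sub>v n2"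
  have "g \<cdot>\<^sub>v v = (hB * F3) *\<^sub>v v" unfolding i3 using v by (simp add: smult_one_mv)
  also have "\<dots> = 0\<^sub>v n3" using c h v by (simp add: mv_zero)
  finally show "g \<cdot>\<^sub>v v = 0\<^sub>v n3" .
qed


lemma vec_cancel:
  assumes r1: "\<forall>r. (x1::'a::comm_ring_1) * r = 0 \<longrightarrow> r = 0"
    and v: "v \<in> carrier_vec n" "w \<in> carrier_vec n" and e: "x1 \<cdot>\<^sub>v v = x1 \<cdot>\<^sub>v w"
  shows "v = w"
proof (rule eq_vecI)
  fix i assume i: "i < dim_vec w"
  have "x1 * v $ i = x1 * w $ i" using e i v by (metis carrier_vecD index_smult_vec(1))
  then have "x1 * (v $ i - w $ i) = 0" by (simp add: algebra_simps)
  then show "v $ i = w $ i" using r1 by auto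
qed (use v in auto)

lemma div_vec:
  assumes "a \<in> carrier_vec n" and h: "\<forall>i<n. \<exists>d. a $ i = d * (x1::'a::comm_ring_1)"
  shows "\<exists>u\<in>carrier_vec n. a = x1 \<cdot>\<^sub>v u"
proof (rule bexI[of _ "vec n (\<lambda>i. SOME d. a $ i = d * x1)"])
  show "a = x1 \<cdot>\<^sub>v vec n (\<lambda>i. SOME d. a $ i = d * x1)"
  proof (rule eq_vecI)
    fix i assume "i < dim_vec (x1 \<cdot>\<^sub>v vec n (\<lambda>i. SOME d. a $ i = d * x1))"
    then have i: "i < n" by simp
    then have "a $ i = (SOME d. a $ i = d * x1) * x1" using h by (metis (mono_tags, lifting) someI_ex)
    then show "a $ i = (x1 \<cdot>\<^sub>v vec n (\<lambda>i. SOME d. a $ i = d * x1)) $ i" using i by (simp add: mult.commute)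
  qed (use assms in auto)
qed simp

lemma div2_vec:
  assumes "a \<in> carrier_vec n" and h: "\<forall>i<n. \<exists>c d. a $ i = c * (x1::'a::comm_ring_1) + d * x2"
  shows "\<exists>p\<in>carrier_vec n. \<exists>q\<in>carrier_vec n. a = x1 \<cdot>\<^sub>v p + x2 \<cdot>\<^sub>v q"
proof -
  define P where "P = (\<lambda>i. SOME cd. a $ i = fst cd * x1 + snd cd * x2)"
  have P: "a $ i = fst (P i) * x1 + snd (P i) * x2" if "i < n" for i
  proof -
    obtain c d where "a $ i = c * x1 + d * x2" using h \<open>i < n\<close> by blast
    then have "\<exists>cd. a $ i = fst cd * x1 + snd cd * x2" by (intro exI[of _ "(c,d)"]) simp
    then show ?thesis unfolding P_def by (rule someI_ex)
  qed
  show ?thesis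
  proof (intro bexI)
    show "a = x1 \<cdot>\<^sub>v vec n (\<lambda>i. fst (P i)) + x2 \<cdot>\<^sub>v vec n (\<lambda>i. snd (P i))"
      by (rule eq_vecI) (use assms P in \<open>auto simp: mult.commute\<close>)
  qed auto
qed

lemma mv_lin2: "(A::'a::comm_ring_1 mat) \<in> carrier_mat n m \<Longrightarrow> p \<in> carrier_vec m \<Longrightarrow> q \<in> carrier_vec m \<Longrightarrow>
  A *\<^sub>v (a \<cdot>\<^sub>v p + b \<cdot>\<^sub>v q) = a \<cdot>\<^sub>v (A *\<^sub>v p) + b \<cdot>\<^sub>v (A *\<^sub>v q)"
  by (rule eq_vecI) (auto simp: scalar_prod_def sum_distrib_left sum.distrib algebra_simps)

lemma mv_lin2m: "(A::'a::comm_ring_1 mat) \<in> carrier_mat n m \<Longrightarrow> p \<in> carrier_vec m \<Longrightarrow> q \<in> carrier_vec m \<Longrightarrow>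
  A *\<^sub>v (a \<cdot>\<^sub>v p - b \<cdot>\<^sub>v q) = a \<cdot>\<^sub>v (A *\<^sub>v p) - b \<cdot>\<^sub>v (A *\<^sub>v q)"
  by (rule eq_vecI) (auto simp: scalar_prod_def sum_distrib_left sum_subtractf algebra_simps)

lemma mv_lin3: "(A::'a::comm_ring_1 mat) \<in> carrier_mat n m \<Longrightarrow> p \<in> carrier_vec m \<Longrightarrow> q \<in> carrier_vec m \<Longrightarrow> r \<in> carrier_vec m \<Longrightarrow>
  A *\<^sub>v (a \<cdot>\<^sub>v p - b \<cdot>\<^sub>v q + c \<cdot>\<^sub>v r) = a \<cdot>\<^sub>v (A *\<^sub>v p) - b \<cdot>\<^sub>v (A *\<^sub>v q) + c \<cdot>\<^sub>v (A *\<^sub>v r)"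
  by (rule eq_vecI) (auto simp: scalar_prod_def sum_distrib_left sum_subtractf sum.distrib algebra_simps)

lemma swap_ker:
  assumes A: "(A::'a::comm_ring_1 mat) \<in> carrier_mat n m" and w: "wa \<in> carrier_vec m" "wb \<in> carrier_vec m"
    and v: "v \<in> carrier_vec n" and ea: "x \<cdot>\<^sub>v v = A *\<^sub>v wa" and eb: "y \<cdot>\<^sub>v v = A *\<^sub>v wb"
  shows "A *\<^sub>v (y \<cdot>\<^sub>v wa - x \<cdot>\<^sub>v wb) = 0\<^sub>v n"
proof -
  have "A *\<^sub>v (y \<cdot>\<^sub>v wa - x \<cdot>\<^sub>v wb) = y \<cdot>\<^sub>v (x \<cdot>\<^sub>v v) - x \<cdot>\<^sub>v (y \<cdot>\<^sub>v v)"
    using mv_lin2m[OF A w] ea eb by simp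
  also have "\<dots> = 0\<^sub>v n" by (rule eq_vecI) (use v in auto)
  finally show ?thesis .
qed

lemma acyc_abstract:
  fixes F1 :: "'a::comm_ring_1 mat"
  assumes c: "F1 \<in> carrier_mat n0 n1" "F2 \<in> carrier_mat n1 n2" "F3 \<in> carrier_mat n2 n3"
    and cx: "F2 * F3 = 0\<^sub>m n1 n3"
    and g1: "good F1 F2 F3 n0 n1 n2 n3 x1" and g2: "good F1 F2 F3 n0 n1 n2 n3 x2"
    and g3: "good F1 F2 F3 n0 n1 n2 n3 x3"
    and r1: "\<forall>r. x1 * r = 0 \<longrightarrow> r = 0"
    and r2: "\<forall>r c. x2 * r = c * x1 \<longrightarrow> (\<exists>d. r = d * x1)"
    and r3: "\<forall>r a b. x3 * r = a * x1 + b * x2 \<longrightarrow> (\<exists>c d. r = c * x1 + d * x2)"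
  shows "acyclic3 F1 F2 F3"
proof -
  have dims: "dim_row F1 = n0" "dim_col F1 = n1" "dim_row F2 = n1" "dim_col F2 = n2" "dim_row F3 = n2" "dim_col F3 = n3"
    using c by auto
  have H3: "v = 0\<^sub>v n3" if v: "v \<in> carrier_vec n3" "F3 *\<^sub>v v = 0\<^sub>v n2" for v
  proof -
    have "x1 \<cdot>\<^sub>v v = 0\<^sub>v n3" using g1 v unfolding good_def by auto
    also have "\<dots> = x1 \<cdot>\<^sub>v 0\<^sub>v n3" by (simp add: smult_zero_v)
    finally show ?thesis using vec_cancel[OF r1 v(1)] by auto
  qed
  have H2: "\<exists>w\<in>carrier_vec n3. v = F3 *\<^sub>v w" if v: "v \<in> carrier_vec n2" "F2 *\<^sub>v v = 0\<^sub>v n1" for v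
  proof -
    obtain w1 where w1: "w1 \<in> carrier_vec n3" "x1 \<cdot>\<^sub>v v = F3 *\<^sub>v w1" using g1 v unfolding good_def by meson
    obtain w2 where w2: "w2 \<in> carrier_vec n3" "x2 \<cdot>\<^sub>v v = F3 *\<^sub>v w2" using g2 v unfolding good_def by meson
    have "x2 \<cdot>\<^sub>v w1 - x1 \<cdot>\<^sub>v w2 = 0\<^sub>v n3"
      by (rule H3) (use swap_ker[OF c(3) w1(1) w2(1) v(1) w1(2) w2(2)] w1 w2 in auto)
    then have "\<forall>i<n3. \<exists>d. w1 $ i = d * x1"
    proof (intro allI impI)
      fix i assume i: "i < n3"
      assume "x2 \<cdot>\<^sub>v w1 - x1 \<cdot>\<^sub>v w2 = 0\<^sub>v n3"
      then have "(x2 \<cdot>\<^sub>v w1 - x1 \<cdot>\<^sub>v w2) $ i = 0" using i by simp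
      then have "x2 * w1 $ i = w2 $ i * x1" using i w1 w2 by (simp add: mult.commute)
      then show "\<exists>d. w1 $ i = d * x1" using r2 by blast
    qed
    then obtain u where u: "u \<in> carrier_vec n3" "w1 = x1 \<cdot>\<^sub>v u" using div_vec[OF w1(1)] by blast
    have "x1 \<cdot>\<^sub>v v = x1 \<cdot>\<^sub>v (F3 *\<^sub>v u)" using w1(2) u c by (simp add: mv_smult)
    then have "v = F3 *\<^sub>v u" using vec_cancel[OF r1 v(1), of "F3 *\<^sub>v u"] c u by auto
    then show ?thesis using u by auto
  qed
  have H1: "\<exists>w\<in>carrier_vec n2. v = F2 *\<^sub>v w" if v: "v \<in> carrier_vec n1" "F1 *\<^sub>v v = 0\<^sub>v n0" for v
  proof -
    obtain w1 where w1: "w1 \<in> carrier_vec n2" "x1 \<cdot>\<^sub>v v = F2 *\<^sub>v w1" using g1 v unfolding good_def by meson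
    obtain w2 where w2: "w2 \<in> carrier_vec n2" "x2 \<cdot>\<^sub>v v = F2 *\<^sub>v w2" using g2 v unfolding good_def by meson
    obtain w3 where w3: "w3 \<in> carrier_vec n2" "x3 \<cdot>\<^sub>v v = F2 *\<^sub>v w3" using g3 v unfolding good_def by meson
    obtain u12 where u12: "u12 \<in> carrier_vec n3" "x2 \<cdot>\<^sub>v w1 - x1 \<cdot>\<^sub>v w2 = F3 *\<^sub>v u12"
      using H2[OF _ swap_ker[OF c(2) w1(1) w2(1) v(1) w1(2) w2(2)]] w1 w2 by auto
    obtain u13 where u13: "u13 \<in> carrier_vec n3" "x3 \<cdot>\<^sub>v w1 - x1 \<cdot>\<^sub>v w3 = F3 *\<^sub>v u13"
      using H2[OF _ swap_ker[OF c(2) w1(1) w3(1) v(1) w1(2) w3(2)]] w1 w3 by auto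
    obtain u23 where u23: "u23 \<in> carrier_vec n3" "x3 \<cdot>\<^sub>v w2 - x2 \<cdot>\<^sub>v w3 = F3 *\<^sub>v u23"
      using H2[OF _ swap_ker[OF c(2) w2(1) w3(1) v(1) w2(2) w3(2)]] w2 w3 by auto
    have "F3 *\<^sub>v (x3 \<cdot>\<^sub>v u12 - x2 \<cdot>\<^sub>v u13 + x1 \<cdot>\<^sub>v u23)
       = x3 \<cdot>\<^sub>v (x2 \<cdot>\<^sub>v w1 - x1 \<cdot>\<^sub>v w2) - x2 \<cdot>\<^sub>v (x3 \<cdot>\<^sub>v w1 - x1 \<cdot>\<^sub>v w3) + x1 \<cdot>\<^sub>v (x3 \<cdot>\<^sub>v w2 - x2 \<cdot>\<^sub>v w3)"
      using mv_lin3[OF c(3) u12(1) u13(1) u23(1)] u12 u13 u23 by simp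
    also have "\<dots> = 0\<^sub>v n2" by (rule eq_vecI) (use w1 w2 w3 in \<open>auto simp: algebra_simps\<close>)
    finally have "x3 \<cdot>\<^sub>v u12 - x2 \<cdot>\<^sub>v u13 + x1 \<cdot>\<^sub>v u23 = 0\<^sub>v n3"
      by (intro H3) (use u12 u13 u23 in auto)
    then have "\<forall>i<n3. \<exists>c d. u12 $ i = c * x1 + d * x2"
    proof (intro allI impI)
      fix i assume i: "i < n3"
      assume "x3 \<cdot>\<^sub>v u12 - x2 \<cdot>\<^sub>v u13 + x1 \<cdot>\<^sub>v u23 = 0\<^sub>v n3"
      then have "(x3 \<cdot>\<^sub>v u12 - x2 \<cdot>\<^sub>v u13 + x1 \<cdot>\<^sub>v u23) $ i = 0" using i by simp
      then have "x3 * u12 $ i = (- u23 $ i) * x1 + u13 $ i * x2" using i u12 u13 u23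
        by (simp add: algebra_simps add_eq_0_iff eq_neg_iff_add_eq_0)
      then show "\<exists>c d. u12 $ i = c * x1 + d * x2" using r3 by blast
    qed
    then obtain al be where ab: "al \<in> carrier_vec n3" "be \<in> carrier_vec n3" "u12 = x1 \<cdot>\<^sub>v al + x2 \<cdot>\<^sub>v be"
      using div2_vec[OF u12(1)] by blast
    have e: "x2 \<cdot>\<^sub>v w1 - x1 \<cdot>\<^sub>v w2 = x1 \<cdot>\<^sub>v (F3 *\<^sub>v al) + x2 \<cdot>\<^sub>v (F3 *\<^sub>v be)"
      using u12(2) ab mv_lin2[OF c(3) ab(1) ab(2)] by simp
    have "\<forall>i<n2. \<exists>d. (w1 - F3 *\<^sub>v be) $ i = d * x1"
    proof (intro allI impI)
      fix i assume i: "i < n2"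
      have "(x2 \<cdot>\<^sub>v w1 - x1 \<cdot>\<^sub>v w2) $ i = (x1 \<cdot>\<^sub>v (F3 *\<^sub>v al) + x2 \<cdot>\<^sub>v (F3 *\<^sub>v be)) $ i"
        using e by simp
      then have "x2 * (w1 - F3 *\<^sub>v be) $ i = (w2 $ i + (F3 *\<^sub>v al) $ i) * x1"
        using i w1 w2 c by (simp add: algebra_simps)
      then show "\<exists>d. (w1 - F3 *\<^sub>v be) $ i = d * x1" using r2 by blast
    qed
    moreover have "w1 - F3 *\<^sub>v be \<in> carrier_vec n2" using w1 c ab by auto
    ultimately obtain w' where w': "w' \<in> carrier_vec n2" "w1 - F3 *\<^sub>v be = x1 \<cdot>\<^sub>v w'"
      using div_vec[of "w1 - F3 *\<^sub>v be" n2 x1] by blast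
    have w1e: "w1 = x1 \<cdot>\<^sub>v w' + F3 *\<^sub>v be"
    proof (rule eq_vecI)
      fix i assume i: "i < dim_vec (x1 \<cdot>\<^sub>v w' + F3 *\<^sub>v be)"
      have i2: "i < n2" using i w' c by simp
      have a: "(w1 - F3 *\<^sub>v be) $ i = w1 $ i - (F3 *\<^sub>v be) $ i" using i2 c ab by simp
      have b: "(x1 \<cdot>\<^sub>v w') $ i = x1 * w' $ i" using i2 w' by simp
      have "w1 $ i - (F3 *\<^sub>v be) $ i = x1 * w' $ i" by (metis a b w'(2))
      then show "w1 $ i = (x1 \<cdot>\<^sub>v w' + F3 *\<^sub>v be) $ i" using i2 w1 w' c by (simp add: algebra_simps)
    qed (use w1 w' c in auto)
    have "F2 *\<^sub>v (F3 *\<^sub>v be) = 0\<^sub>v n1"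
    proof -
      have "F2 *\<^sub>v (F3 *\<^sub>v be) = (F2 * F3) *\<^sub>v be" using c ab by simp
      also have "\<dots> = 0\<^sub>v n1" unfolding cx by (rule eq_vecI) (use ab in auto)
      finally show ?thesis .
    qed
    then have "F2 *\<^sub>v w1 = x1 \<cdot>\<^sub>v (F2 *\<^sub>v w')"
      unfolding w1e using c w' ab by (simp add: mult_add_distrib_mat_vec[of _ n1 n2] mv_smult)
    then have "v = F2 *\<^sub>v w'" using w1(2) vec_cancel[OF r1 v(1), of "F2 *\<^sub>v w'"] c w' by auto
    then show ?thesis using w' by auto
  qed
  show ?thesis unfolding acyclic3_def dims using H1 H2 H3 by blast
qed


lemma ideal_gen_empty: "(y::'a::comm_ring_1) \<in> ideal_gen {} \<longleftrightarrow> y = 0"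
  unfolding ideal_gen_def by simp

lemma ideal_gen_one: "(y::'a::comm_ring_1) \<in> ideal_gen {x} \<longleftrightarrow> (\<exists>d. y = d * x)"
proof
  assume "y \<in> ideal_gen {x}"
  then show "\<exists>d. y = d * x" unfolding ideal_gen_def by auto
next
  assume "\<exists>d. y = d * x"
  then obtain d where "y = d * x" by blast
  then have "y = (\<Sum>s\<in>{x}. (\<lambda>_. d) s * s)" by simp
  then show "y \<in> ideal_gen {x}" unfolding ideal_gen_def mem_Collect_eq
    by (intro exI[where x="\<lambda>_. d"])
qed

lemma ideal_gen_two: "(y::'a::comm_ring_1) \<in> ideal_gen {x1, x2} \<longleftrightarrow> (\<exists>a b. y = a * x1 + b * x2)"
proof (cases "x1 = x2")
  case True
  have "(\<exists>d. y = d * x1) \<longleftrightarrow> (\<exists>a b. y = a * x1 + b * x2)"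
  proof
    assume "\<exists>d. y = d * x1"
    then obtain d where "y = d * x1" by blast
    then have "y = d * x1 + 0 * x2" by simp
    then show "\<exists>a b. y = a * x1 + b * x2" by blast
  next
    assume "\<exists>a b. y = a * x1 + b * x2"
    then obtain a b where "y = a * x1 + b * x2" by blast
    then have "y = (a + b) * x1" using True by (simp add: distrib_right)
    then show "\<exists>d. y = d * x1" by blast
  qed
  then show ?thesis using True ideal_gen_one[of y x1] by simp
next
  case False
  show ?thesis
  proof
    assume "y \<in> ideal_gen {x1, x2}"
    then obtain c where "y = (\<Sum>s\<in>{x1,x2}. c s * s)" unfolding ideal_gen_def by blast
    then have "y = c x1 * x1 + c x2 * x2" using False by simp
    then show "\<exists>a b. y = a * x1 + b * x2" by blast
  next
    assume "\<exists>a b. y = a * x1 + b * x2"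
    then obtain a b where y: "y = a * x1 + b * x2" by blast
    have "y = (\<Sum>s\<in>{x1,x2}. (\<lambda>s. if s = x1 then a else b) s * s)" using False y by simp
    then show "y \<in> ideal_gen {x1, x2}" unfolding ideal_gen_def mem_Collect_eq
      by (intro exI[where x="\<lambda>s. if s = x1 then a else b"])
  qed
qed

lemma wrs3:
  assumes "weak_regular_seq [x1, x2, (x3::'a::comm_ring_1)]"
  shows "\<forall>r. x1 * r = 0 \<longrightarrow> r = 0"
    and "\<forall>r c. x2 * r = c * x1 \<longrightarrow> (\<exists>d. r = d * x1)"
    and "\<forall>r a b. x3 * r = a * x1 + b * x2 \<longrightarrow> (\<exists>c d. r = c * x1 + d * x2)"
proof -
  have h: "\<And>i r. i < 3 \<Longrightarrow> [x1, x2, x3] ! i * r \<in> ideal_gen (set (take i [x1, x2, x3]))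
     \<Longrightarrow> r \<in> ideal_gen (set (take i [x1, x2, x3]))"
    using assms unfolding weak_regular_seq_def by auto
  show "\<forall>r. x1 * r = 0 \<longrightarrow> r = 0" using h[of 0] by (simp add: ideal_gen_empty)
  show "\<forall>r c. x2 * r = c * x1 \<longrightarrow> (\<exists>d. r = d * x1)" using h[of 1] by (simp add: ideal_gen_one)
  show "\<forall>r a b. x3 * r = a * x1 + b * x2 \<longrightarrow> (\<exists>c d. r = c * x1 + d * x2)"
    using h[of 2] by (simp add: ideal_gen_two numeral_2_eq_2)
qed

definition Em :: "nat \<Rightarrow> 'a::comm_ring_1 mat" where "Em k = mat 5 1 (\<lambda>(i,j). if i = k then 1 else 0)"

context fixes a11 a12 a13 a21 a22 a23 l11 l12 l13 l21 l22 l23 p12 p13 p23 z1 z2 :: "'a::comm_ring_1"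
begin
definition "gg0 = (- a11*l21*z2 - a12*l22*z2 - a13*l23*z2 + a21*l11*z2 + a22*l12*z2 + a23*l13*z2 - l11*l22*p12 - l11*l23*p13 + l12*l21*p12 - l12*l23*p23 + l13*l21*p13 + l13*l22*p23 - z1*z2)"
definition "gg1 = (a11*l21*p23 - a12*a23*z2 - a12*l21*p13 + a13*a22*z2 + a13*l21*p12 - a21*l11*p23 + a22*l11*p13 - a23*l11*p12 + p23*z1)"
definition "gg2 = (a11*a23*z2 + a11*l22*p23 - a12*l22*p13 - a13*a21*z2 + a13*l22*p12 - a21*l12*p23 + a22*l12*p13 - a23*l12*p12 - p13*z1)"
definition "gg3 = (- a11*a22*z2 + a11*l23*p23 + a12*a21*z2 - a12*l23*p13 + a13*l23*p12 - a21*l13*p23 + a22*l13*p13 - a23*l13*p12 + p12*z1)"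
definition "gg4 = (- a11*a22*l11*l22 + a11*a22*l12*l21 - a11*a23*l11*l23 + a11*a23*l13*l21 - a11*l21*z1 + a12*a21*l11*l22 - a12*a21*l12*l21 - a12*a23*l12*l23 + a12*a23*l13*l22 - a12*l22*z1 + a13*a21*l11*l23 - a13*a21*l13*l21 + a13*a22*l12*l23 - a13*a22*l13*l22 - a13*l23*z1 + a21*l11*z1 + a22*l12*z1 + a23*l13*z1 - z1^2)"
definition "hA0 = mat_of_rows_list 5 [[0, (l11), (l12), (l13), 0], [0, (l21), (l22), (l23), 0], [0, (- p23), (p13), (- p12), (a11*l21 + a12*l22 + a13*l23 - a21*l11 - a22*l12 - a23*l13 + z1)], [0, (z2), 0, 0, (l12*l23 - l13*l22)], [0, 0, (z2), 0, (- l11*l23 + l13*l21)], [0, 0, 0, (z2), (l11*l22 - l12*l21)]]"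
definition "hB0 = mat_of_rows_list 6 [[0, (z2), 0, (- l21), (- l22), (- l23)], [(- z2), 0, 0, (l11), (l12), (l13)]]"
definition "hA1 = mat_of_rows_list 5 [[(- l11), 0, (a13), (- a12), 0], [(- l21), 0, (a23), (- a22), 0], [(p23), 0, 0, 0, (a12*a23 - a13*a22)], [(- z2), 0, (- p13), (p12), (- a11*l21 + a21*l11 - z1)], [0, 0, (- p23), 0, (- a12*l21 + a22*l11)], [0, 0, 0, (- p23), (- a13*l21 + a23*l11)]]"
definition "hB1 = mat_of_rows_list 6 [[0, (- p23), (- l21), 0, (- a23), (a22)], [(p23), 0, (l11), 0, (a13), (- a12)]]"
definition "hA2 = mat_of_rows_list 5 [[(- l12), (- a13), 0, (a11), 0], [(- l22), (- a23), 0, (a21), 0], [(- p13), 0, 0, 0, (- a11*a23 + a13*a21)], [0, (p13), 0, 0, (- a11*l22 + a21*l12)], [(- z2), (p23), 0, (p12), (- a12*l22 + a22*l12 - z1)], [0, 0, 0, (p13), (- a13*l22 + a23*l12)]]"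
definition "hB2 = mat_of_rows_list 6 [[0, (p13), (- l22), (a23), 0, (- a21)], [(- p13), 0, (l12), (- a13), 0, (a11)]]"
definition "hA3 = mat_of_rows_list 5 [[(- l13), (a12), (- a11), 0, 0], [(- l23), (a22), (- a21), 0, 0], [(p12), 0, 0, 0, (a11*a22 - a12*a21)], [0, (- p12), 0, 0, (- a11*l23 + a21*l13)], [0, 0, (- p12), 0, (- a12*l23 + a22*l13)], [(- z2), (p23), (- p13), 0, (- a13*l23 + a23*l13 - z1)]]"
definition "hB3 = mat_of_rows_list 6 [[0, (- p12), (- l23), (- a22), (a21), 0], [(p12), 0, (l13), (a12), (- a11), 0]]"
definition "hA4 = mat_of_rows_list 5 [[0, 0, 0, 0, 0], [0, 0, 0, 0, 0], [(- a11*l21 - a12*l22 - a13*l23 + a21*l11 + a22*l12 + a23*l13 - z1), (- a12*a23 + a13*a22), (a11*a23 - a13*a21), (- a11*a22 + a12*a21), 0], [(- l12*l23 + l13*l22), (a11*l21 - a21*l11 + z1), (a11*l22 - a21*l12), (a11*l23 - a21*l13), 0], [(l11*l23 - l13*l21), (a12*l21 - a22*l11), (a12*l22 - a22*l12 + z1), (a12*l23 - a22*l13), 0], [(- l11*l22 + l12*l21), (a13*l21 - a23*l11), (a13*l22 - a23*l12), (a13*l23 - a23*l13 + z1), 0]]"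
definition "hB4 = mat_of_rows_list 6 [[(- a21*l21 - a22*l22 - a23*l23), (a11*l21 + a12*l22 + a13*l23 + z1), 0, 0, 0, 0], [(a21*l11 + a22*l12 + a23*l13 - z1), (- a11*l11 - a12*l12 - a13*l13), 0, 0, 0, 0]]"

definition "Q1e = mat_of_rows_list 5 [[gg0, gg1, gg2, gg3, gg4]]"

lemma Q1_eq: "q1 a11 a12 a13 a21 a22 a23 l11 l12 l13 l21 l22 l23 p12 p13 p23 z1 z2 = Q1e"
  unfolding q1_def Let_def Q1e_def matA_def matL_def
  unfolding det3_rows det_prod2 dot3
  by (simp add: gg0_def gg1_def gg2_def gg3_def gg4_def algebra_simps power2_eq_square)

abbreviation "Q2e \<equiv> q2 a11 a12 a13 a21 a22 a23 l11 l12 l13 l21 l22 l23 p12 p13 p23 z1 z2"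
abbreviation "Q3e \<equiv> q3 a11 a12 a13 a21 a22 a23 l11 l12 l13 l21 l22 l23 p12 p13 p23 z1 z2"
lemmas gg_defs = gg0_def gg1_def gg2_def gg3_def gg4_def

lemma cx1: "Q1e * Q2e = 0\<^sub>m 1 6"
  by (rule eq_matI) (auto simp: Q1e_def q2_def mat_of_rows_list_def mat_of_cols_list_def scalar_prod_def sum5 row_def col_def gg_defs less_Suc_eq eval_nat_numeral algebra_simps)

lemma cx2: "Q2e * Q3e = 0\<^sub>m 5 2"
  by (rule eq_matI) (auto simp: q3_def q2_def mat_of_rows_list_def mat_of_cols_list_def scalar_prod_def sum6 row_def col_def less_Suc_eq eval_nat_numeral algebra_simps)
lemma hA0_id: "Q2e * hA0 + Em 0 * Q1e = gg0 \<cdot>\<^sub>m 1\<^sub>m 5"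
  by (rule eq_matI) (auto simp: Q1e_def q2_def q3_def hA0_def hB0_def Em_def mat_of_rows_list_def mat_of_cols_list_def scalar_prod_def sum5 sum6 sum2 sum1 row_def col_def gg_defs less_Suc_eq eval_nat_numeral algebra_simps)
lemma hB0_id: "Q3e * hB0 + hA0 * Q2e = gg0 \<cdot>\<^sub>m 1\<^sub>m 6"
  by (rule eq_matI) (auto simp: Q1e_def q2_def q3_def hA0_def hB0_def Em_def mat_of_rows_list_def mat_of_cols_list_def scalar_prod_def sum5 sum6 sum2 sum1 row_def col_def gg_defs less_Suc_eq eval_nat_numeral algebra_simps)
lemma hC0_id: "hB0 * Q3e = gg0 \<cdot>\<^sub>m 1\<^sub>m 2"
  by (rule eq_matI) (auto simp: Q1e_def q2_def q3_def hA0_def hB0_def Em_def mat_of_rows_list_def mat_of_cols_list_def scalar_prod_def sum5 sum6 sum2 sum1 row_def col_def gg_defs less_Suc_eq eval_nat_numeral algebra_simps)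

lemma hA1_id: "Q2e * hA1 + Em 1 * Q1e = gg1 \<cdot>\<^sub>m 1\<^sub>m 5"
  by (rule eq_matI) (auto simp: Q1e_def q2_def q3_def hA1_def hB1_def Em_def mat_of_rows_list_def mat_of_cols_list_def scalar_prod_def sum5 sum6 sum2 sum1 row_def col_def gg_defs less_Suc_eq eval_nat_numeral algebra_simps)
lemma hB1_id: "Q3e * hB1 + hA1 * Q2e = gg1 \<cdot>\<^sub>m 1\<^sub>m 6"
  by (rule eq_matI) (auto simp: Q1e_def q2_def q3_def hA1_def hB1_def Em_def mat_of_rows_list_def mat_of_cols_list_def scalar_prod_def sum5 sum6 sum2 sum1 row_def col_def gg_defs less_Suc_eq eval_nat_numeral algebra_simps)
lemma hC1_id: "hB1 * Q3e = gg1 \<cdot>\<^sub>m 1\<^sub>m 2"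
  by (rule eq_matI) (auto simp: Q1e_def q2_def q3_def hA1_def hB1_def Em_def mat_of_rows_list_def mat_of_cols_list_def scalar_prod_def sum5 sum6 sum2 sum1 row_def col_def gg_defs less_Suc_eq eval_nat_numeral algebra_simps)

lemma hA2_id: "Q2e * hA2 + Em 2 * Q1e = gg2 \<cdot>\<^sub>m 1\<^sub>m 5"
  by (rule eq_matI) (auto simp: Q1e_def q2_def q3_def hA2_def hB2_def Em_def mat_of_rows_list_def mat_of_cols_list_def scalar_prod_def sum5 sum6 sum2 sum1 row_def col_def gg_defs less_Suc_eq eval_nat_numeral algebra_simps)
lemma hB2_id: "Q3e * hB2 + hA2 * Q2e = gg2 \<cdot>\<^sub>m 1\<^sub>m 6"
  by (rule eq_matI) (auto simp: Q1e_def q2_def q3_def hA2_def hB2_def Em_def mat_of_rows_list_def mat_of_cols_list_def scalar_prod_def sum5 sum6 sum2 sum1 row_def col_def gg_defs less_Suc_eq eval_nat_numeral algebra_simps)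
lemma hC2_id: "hB2 * Q3e = gg2 \<cdot>\<^sub>m 1\<^sub>m 2"
  by (rule eq_matI) (auto simp: Q1e_def q2_def q3_def hA2_def hB2_def Em_def mat_of_rows_list_def mat_of_cols_list_def scalar_prod_def sum5 sum6 sum2 sum1 row_def col_def gg_defs less_Suc_eq eval_nat_numeral algebra_simps)

lemma hA3_id: "Q2e * hA3 + Em 3 * Q1e = gg3 \<cdot>\<^sub>m 1\<^sub>m 5"
  by (rule eq_matI) (auto simp: Q1e_def q2_def q3_def hA3_def hB3_def Em_def mat_of_rows_list_def mat_of_cols_list_def scalar_prod_def sum5 sum6 sum2 sum1 row_def col_def gg_defs less_Suc_eq eval_nat_numeral algebra_simps)
lemma hB3_id: "Q3e * hB3 + hA3 * Q2e = gg3 \<cdot>\<^sub>m 1\<^sub>m 6"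
  by (rule eq_matI) (auto simp: Q1e_def q2_def q3_def hA3_def hB3_def Em_def mat_of_rows_list_def mat_of_cols_list_def scalar_prod_def sum5 sum6 sum2 sum1 row_def col_def gg_defs less_Suc_eq eval_nat_numeral algebra_simps)
lemma hC3_id: "hB3 * Q3e = gg3 \<cdot>\<^sub>m 1\<^sub>m 2"
  by (rule eq_matI) (auto simp: Q1e_def q2_def q3_def hA3_def hB3_def Em_def mat_of_rows_list_def mat_of_cols_list_def scalar_prod_def sum5 sum6 sum2 sum1 row_def col_def gg_defs less_Suc_eq eval_nat_numeral algebra_simps)

lemma hA4_id: "Q2e * hA4 + Em 4 * Q1e = gg4 \<cdot>\<^sub>m 1\<^sub>m 5"
  by (rule eq_matI) (auto simp: Q1e_def q2_def q3_def hA4_def hB4_def Em_def mat_of_rows_list_def mat_of_cols_list_def scalar_prod_def sum5 sum6 sum2 sum1 row_def col_def gg_defs less_Suc_eq eval_nat_numeral algebra_simps)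
lemma hB4_id: "Q3e * hB4 + hA4 * Q2e = gg4 \<cdot>\<^sub>m 1\<^sub>m 6"
  by (rule eq_matI) (auto simp: Q1e_def q2_def q3_def hA4_def hB4_def Em_def mat_of_rows_list_def mat_of_cols_list_def scalar_prod_def sum5 sum6 sum2 sum1 row_def col_def gg_defs less_Suc_eq eval_nat_numeral algebra_simps)
lemma hC4_id: "hB4 * Q3e = gg4 \<cdot>\<^sub>m 1\<^sub>m 2"
  by (rule eq_matI) (auto simp: Q1e_def q2_def q3_def hA4_def hB4_def Em_def mat_of_rows_list_def mat_of_cols_list_def scalar_prod_def sum5 sum6 sum2 sum1 row_def col_def gg_defs less_Suc_eq eval_nat_numeral algebra_simps)

lemma carriers: "Q1e \<in> carrier_mat 1 5" "Q2e \<in> carrier_mat 5 6" "Q3e \<in> carrier_mat 6 2"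
  "hA0 \<in> carrier_mat 6 5" "hA1 \<in> carrier_mat 6 5" "hA2 \<in> carrier_mat 6 5" "hA3 \<in> carrier_mat 6 5" "hA4 \<in> carrier_mat 6 5"
  "hB0 \<in> carrier_mat 2 6" "hB1 \<in> carrier_mat 2 6" "hB2 \<in> carrier_mat 2 6" "hB3 \<in> carrier_mat 2 6" "hB4 \<in> carrier_mat 2 6"
  "\<And>k. (Em k :: 'a mat) \<in> carrier_mat 5 1"
  by (auto simp: Q1e_def q2_def q3_def hA0_def hA1_def hA2_def hA3_def hA4_def hB0_def hB1_def hB2_def hB3_def hB4_def
     Em_def mat_of_rows_list_def mat_of_cols_list_def)

lemma good_gens: "\<forall>s\<in>{Q1e $$ (0, j) | j. j < 5}. good Q1e Q2e Q3e 1 5 6 2 s"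
proof -
  note c = carriers(1-3)
  have "good Q1e Q2e Q3e 1 5 6 2 gg0" by (rule good_homotopy[OF c carriers(4) carriers(9) carriers(14) hA0_id hB0_id hC0_id])
  moreover have "good Q1e Q2e Q3e 1 5 6 2 gg1" by (rule good_homotopy[OF c carriers(5) carriers(10) carriers(14) hA1_id hB1_id hC1_id])
  moreover have "good Q1e Q2e Q3e 1 5 6 2 gg2" by (rule good_homotopy[OF c carriers(6) carriers(11) carriers(14) hA2_id hB2_id hC2_id])
  moreover have "good Q1e Q2e Q3e 1 5 6 2 gg3" by (rule good_homotopy[OF c carriers(7) carriers(12) carriers(14) hA3_id hB3_id hC3_id])
  moreover have "good Q1e Q2e Q3e 1 5 6 2 gg4" by (rule good_homotopy[OF c carriers(8) carriers(13) carriers(14) hA4_id hB4_id hC4_id])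
  moreover have "{Q1e $$ (0, j) | j. j < 5} = {gg0, gg1, gg2, gg3, gg4}"
  proof -
    have "{Q1e $$ (0, j) | j. j < 5} = (\<lambda>j. Q1e $$ (0,j)) ` {0,1,2,3,4::nat}"
      by (auto simp: less_Suc_eq eval_nat_numeral)
    then show ?thesis by (simp add: Q1e_def mat_of_rows_list_def eval_nat_numeral)
  qed
  ultimately show ?thesis by auto
qed

lemma good_ideal: "x \<in> ideal_gen {Q1e $$ (0, j) | j. j < 5} \<Longrightarrow> good Q1e Q2e Q3e 1 5 6 2 x"
proof -
  assume "x \<in> ideal_gen {Q1e $$ (0, j) | j. j < 5}"
  then obtain f where x: "x = (\<Sum>s\<in>{Q1e $$ (0, j) | j. j < 5}. f s * s)" unfolding ideal_gen_def by blast
  have fin: "finite {Q1e $$ (0, j) | j. j < 5}" by simp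
  show ?thesis unfolding x by (rule good_sum[OF carriers(1-3) fin good_gens])
qed

lemma main_ctx:
  "is_complex3 (q1 a11 a12 a13 a21 a22 a23 l11 l12 l13 l21 l22 l23 p12 p13 p23 z1 z2) Q2e Q3e \<and>
   (grade_at_least 3 (ideal_gen {q1 a11 a12 a13 a21 a22 a23 l11 l12 l13 l21 l22 l23 p12 p13 p23 z1 z2 $$ (0, j) | j. j < 5})
     \<longrightarrow> acyclic3 (q1 a11 a12 a13 a21 a22 a23 l11 l12 l13 l21 l22 l23 p12 p13 p23 z1 z2) Q2e Q3e)"
  unfolding Q1_eq
proof (intro conjI impI)
  show "is_complex3 Q1e Q2e Q3e" unfolding is_complex3_def using cx1 cx2 carriers by auto
next
  assume "grade_at_least 3 (ideal_gen {Q1e $$ (0, j) | j. j < 5})"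
  then obtain xs where xs: "length xs = 3" "set xs \<subseteq> ideal_gen {Q1e $$ (0, j) | j. j < 5}" "weak_regular_seq xs"
    unfolding grade_at_least_def by blast
  obtain y1 y2 y3 where xs3: "xs = [y1, y2, y3]" using xs(1)
    by (metis (no_types, lifting) length_0_conv length_Suc_conv numeral_3_eq_3)
  have g: "good Q1e Q2e Q3e 1 5 6 2 y1" "good Q1e Q2e Q3e 1 5 6 2 y2" "good Q1e Q2e Q3e 1 5 6 2 y3"
  proof -
    have "y1 \<in> ideal_gen {Q1e $$ (0, j) | j. j < 5}" "y2 \<in> ideal_gen {Q1e $$ (0, j) | j. j < 5}"
      "y3 \<in> ideal_gen {Q1e $$ (0, j) | j. j < 5}" using xs(2) unfolding xs3 by auto
    then show "good Q1e Q2e Q3e 1 5 6 2 y1" "good Q1e Q2e Q3e 1 5 6 2 y2" "good Q1e Q2e Q3e 1 5 6 2 y3"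
      by (simp_all only: good_ideal)
  qed
  note r = wrs3[OF xs(3)[unfolded xs3]]
  show "acyclic3 Q1e Q2e Q3e"
    by (rule acyc_abstract[OF carriers(1-3) cx2 g r])
qed

end

theorem theorem3p5:
  fixes a11 a12 a13 a21 a22 a23 l11 l12 l13 l21 l22 l23 p12 p13 p23 z1 z2 :: "'a::comm_ring_1"
  assumes "noetherian_ring TYPE('a)"
  defines "Q1 \<equiv> q1 a11 a12 a13 a21 a22 a23 l11 l12 l13 l21 l22 l23 p12 p13 p23 z1 z2"
      and "Q2 \<equiv> q2 a11 a12 a13 a21 a22 a23 l11 l12 l13 l21 l22 l23 p12 p13 p23 z1 z2"
      and "Q3 \<equiv> q3 a11 a12 a13 a21 a22 a23 l11 l12 l13 l21 l22 l23 p12 p13 p23 z1 z2"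
  shows "is_complex3 Q1 Q2 Q3 \<and>
         (grade_at_least 3 (ideal_gen {Q1 $$ (0, j) | j. j < 5}) \<longrightarrow> acyclic3 Q1 Q2 Q3)"
  unfolding Q1_def Q2_def Q3_def by (rule main_ctx)

end
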